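(* Let $f\in K$ have degree $n$. Then $f$ is quasi-symmetric if and only if $A_{\mathbf a^{(k)}}f=f$ for all $1\le k\le n$.
   Context: $K$ is the ring of integer formal power series of bounded degree in $x_1,x_2,\dots$. $f$ is quasi-symmetric if the coefficient of $x_{i_1}^{a_1}\cdots x_{i_k}^{a_k}$ equals that of $x_{j_1}^{a_1}\cdots x_{j_k}^{a_k}$ whenever $i_1<\dots<i_k$ and $j_1<\dots<j_k$. For a strictly increasing sequence $\mathbf a=(1\le a_1<a_2<\cdots)$ of positive integers, $A_{\mathbf a}:K\to K$ is the algebra homomorphism $A_{\mathbf a}f=f(0,\dots,0,x_1,0,\dots,0,x_2,0,\dots)$ with $x_i$ placed in position $a_i$ (i.e. substitute $x_{a_i}\mapsto x_i$ and all other variables $\mapsto0$). For an integer $k\ge1$, $\mathbf a^{(k)}$ is the sequence with $a^{(k)}(i)=i$ for $i<k$ and $a^{(k)}(i)=i+1$ for $i\ge k$. *)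

theory Defs
  imports Main
begin

text \<open>Monomials in the variables x_1, x_2, ... are exponent vectors
  m :: nat \<Rightarrow> nat (m i = exponent of x_i) with finite support and m 0 = 0
  (there is no variable x_0). A formal power series is its coefficient
  function (nat \<Rightarrow> nat) \<Rightarrow> int, vanishing outside valid monomials.\<close>

definition valid_mono :: "(nat \<Rightarrow> nat) \<Rightarrow> bool" where
  "valid_mono m \<longleftrightarrow> m 0 = 0 \<and> finite {i. m i \<noteq> 0}"

definition tdeg :: "(nat \<Rightarrow> nat) \<Rightarrow> nat" where
  "tdeg m = sum m {i. m i \<noteq> 0}"

definition inK :: "((nat \<Rightarrow> nat) \<Rightarrow> int) \<Rightarrow> bool" where
  "inK f \<longleftrightarrow> (\<forall>m. f m \<noteq> 0 \<longrightarrow> valid_mono m) \<and> (\<exists>d. \<forall>m. f m \<noteq> 0 \<longrightarrow> tdeg m \<le> d)"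

definition series_degree :: "((nat \<Rightarrow> nat) \<Rightarrow> int) \<Rightarrow> nat" where
  "series_degree f = (if {m. f m \<noteq> 0} = {} then 0 else Max (tdeg ` {m. f m \<noteq> 0}))"

definition mono_of :: "nat list \<Rightarrow> nat list \<Rightarrow> (nat \<Rightarrow> nat)" where
  "mono_of is al = (\<lambda>v. \<Sum>t<length is. if is ! t = v then al ! t else 0)"

definition quasi_symmetric :: "((nat \<Rightarrow> nat) \<Rightarrow> int) \<Rightarrow> bool" where
  "quasi_symmetric f \<longleftrightarrow>
     (\<forall>al is js. length is = length al \<and> length js = length al \<and> (\<forall>e\<in>set al. 0 < e)
        \<and> sorted_wrt (<) is \<and> sorted_wrt (<) js
        \<and> (\<forall>i\<in>set is. 1 \<le> i) \<and> (\<forall>j\<in>set js. 1 \<le> j)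
        \<longrightarrow> f (mono_of is al) = f (mono_of js al))"

text \<open>A_a f = f(...,x_i in position a_i,...): the coefficient of x^m in A_a f is the
  coefficient in f of the monomial with exponent m_i at x_{a_i} and 0 elsewhere.\<close>
definition subst_A :: "(nat \<Rightarrow> nat) \<Rightarrow> ((nat \<Rightarrow> nat) \<Rightarrow> int) \<Rightarrow> ((nat \<Rightarrow> nat) \<Rightarrow> int)" where
  "subst_A a f = (\<lambda>m. if valid_mono m then
       f (\<lambda>j. if \<exists>i\<ge>1. a i = j then m (THE i. 1 \<le> i \<and> a i = j) else 0)
     else 0)"

definition seq_k :: "nat \<Rightarrow> nat \<Rightarrow> nat" where
  "seq_k k i = (if i < k then i else i + 1)"

end

theory Submission
  imports Defs
begin

definition ins :: "nat \<Rightarrow> (nat \<Rightarrow> nat) \<Rightarrow> (nat \<Rightarrow> nat)" where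
  "ins k m = (\<lambda>j. if j < k then m j else if j = k then 0 else m (j - 1))"

lemma subst_seq_k:
  assumes "1 \<le> k"
  shows "subst_A (seq_k k) f m = (if valid_mono m then f (ins k m) else 0)"
proof (cases "valid_mono m")
  case True
  have "(\<lambda>j. if \<exists>i\<ge>1. seq_k k i = j then m (THE i. 1 \<le> i \<and> seq_k k i = j) else 0) = ins k m"
  proof
    fix j
    show "(if \<exists>i\<ge>1. seq_k k i = j then m (THE i. 1 \<le> i \<and> seq_k k i = j) else 0) = ins k m j"
    proof (cases "j = 0")
      case True
      then show ?thesis using \<open>valid_mono m\<close> assms
        by (auto simp: seq_k_def ins_def valid_mono_def split: if_splits)
    next
      case j0: False
      show ?thesis
      proof (cases "j < k")
        case True
        have "(THE i. 1 \<le> i \<and> seq_k k i = j) = j"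
          by (rule the_equality) (use True j0 in \<open>auto simp: seq_k_def split: if_splits\<close>)
        moreover have "\<exists>i\<ge>1. seq_k k i = j" using True j0 by (intro exI[of _ j]) (auto simp: seq_k_def)
        ultimately show ?thesis using True by (simp add: ins_def)
      next
        case nk: False
        show ?thesis
        proof (cases "j = k")
          case True
          have "\<not> (\<exists>i\<ge>1. seq_k k i = j)" using True by (auto simp: seq_k_def)
          then have "(if \<exists>i\<ge>1. seq_k k i = j then m (THE i. 1 \<le> i \<and> seq_k k i = j) else 0) = 0"
            by (rule if_not_P)
          moreover have "ins k m j = 0" using True by (simp add: ins_def)
          ultimately show ?thesis by (rule trans[OF _ sym])
        next
          case False
          with nk have jk: "j > k" by simp
          have "(THE i. 1 \<le> i \<and> seq_k k i = j) = j - 1"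
            by (rule the_equality) (use jk assms in \<open>auto simp: seq_k_def split: if_splits\<close>)
          moreover have "\<exists>i\<ge>1. seq_k k i = j" using jk assms by (intro exI[of _ "j - 1"]) (auto simp: seq_k_def)
          ultimately show ?thesis using jk by (simp add: ins_def)
        qed
      qed
    qed
  qed
  then show ?thesis using True by (simp add: subst_A_def)
qed (simp add: subst_A_def)

definition sh :: "nat \<Rightarrow> nat \<Rightarrow> nat" where
  "sh k i = (if i < k then i else i + 1)"

lemma ins_mono_of: "ins k (mono_of is al) = mono_of (map (sh k) is) al"
proof
  fix j
  show "ins k (mono_of is al) j = mono_of (map (sh k) is) al j"
    unfolding ins_def mono_of_def
    by (auto intro!: sum.cong simp: sh_def)
qed

lemma mono_of_at:
  assumes "distinct is" "t < length is"
  shows "mono_of is al (is ! t) = al ! t"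
proof -
  have "mono_of is al (is ! t) = (\<Sum>t'<length is. if t' = t then al ! t' else 0)"
    unfolding mono_of_def using assms by (intro sum.cong) (auto simp: nth_eq_iff_index_eq)
  also have "\<dots> = al ! t" using assms by simp
  finally show ?thesis .
qed

lemma mono_of_notin:
  assumes "v \<notin> set is"
  shows "mono_of is al v = 0"
  unfolding mono_of_def using assms by (auto intro!: sum.neutral)

lemma mono_of_supp:
  assumes "distinct is" "length is = length al" "\<forall>e\<in>set al. 0 < e"
  shows "{i. mono_of is al i \<noteq> 0} = set is"
proof (rule equalityI)
  show "{i. mono_of is al i \<noteq> 0} \<subseteq> set is" 
  proof (rule subsetI)
    fix v assume "v \<in> {i. mono_of is al i \<noteq> 0}"
    then have "mono_of is al v \<noteq> 0" by simp
    then show "v \<in> set is" using mono_of_notin[of v "is" al] by auto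
  qed
  show "set is \<subseteq> {i. mono_of is al i \<noteq> 0}"
  proof (rule subsetI)
    fix v assume v: "v \<in> set is"
    have "\<exists>t. t < length is \<and> v = is ! t" using v by (metis in_set_conv_nth)
    then obtain t where t1: "t < length is" and t2: "v = is ! t" by blast
    have e1: "mono_of is al v = al ! t" using mono_of_at[OF assms(1) t1] t2 by metis
    have e2: "al ! t \<in> set al" using t1 assms(2) by (metis nth_mem)
    have e3: "al ! t > 0" using e2 assms(3) by blast
    show "v \<in> {i. mono_of is al i \<noteq> 0}" using e1 e3 by simp
  qed
qed

lemma mono_of_valid:
  assumes "\<forall>i\<in>set is. 1 \<le> i"
  shows "valid_mono (mono_of is al)"
proof -
  have "0 \<notin> set is" using assms by auto
  then have "mono_of is al 0 = 0" by (rule mono_of_notin)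
  moreover have "{i. mono_of is al i \<noteq> 0} \<subseteq> set is" 
  proof (rule subsetI)
    fix v assume "v \<in> {i. mono_of is al i \<noteq> 0}"
    then have "mono_of is al v \<noteq> 0" by simp
    then show "v \<in> set is" using mono_of_notin[of v "is" al] by auto
  qed
  ultimately show ?thesis unfolding valid_mono_def using finite_subset by blast
qed

lemma tdeg_mono_of:
  assumes "distinct is" "length is = length al" "\<forall>e\<in>set al. 0 < e"
  shows "length al \<le> tdeg (mono_of is al)"
proof -
  have S: "{i. mono_of is al i \<noteq> 0} = set is" using mono_of_supp assms by blast
  have "length al = card (set is)" using assms distinct_card by metis
  also have "\<dots> = (\<Sum>i\<in>set is. 1)" by simp
  also have "\<dots> \<le> (\<Sum>i\<in>set is. mono_of is al i)"
    by (rule sum_mono) (use S in \<open>auto simp: Suc_le_eq\<close>)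
  finally show ?thesis unfolding tdeg_def S .
qed

lemma deg_bound:
  assumes "inK f" "f m \<noteq> 0"
  shows "tdeg m \<le> series_degree f"
proof -
  obtain d where d: "\<forall>m. f m \<noteq> 0 \<longrightarrow> tdeg m \<le> d" using assms(1) unfolding inK_def by blast
  have "finite (tdeg ` {m. f m \<noteq> 0})" by (rule finite_subset[of _ "{..d}"]) (use d in auto)
  then show ?thesis unfolding series_degree_def using assms(2)
    by (auto intro!: Max_ge)
qed

lemma sum_list_less:
  fixes xs :: "nat list"
  assumes "\<forall>x\<in>set xs. g x \<le> x" "\<exists>x\<in>set xs. g x < x"
  shows "sum_list (map g xs) < sum_list xs"
  using assms
proof (induction xs)
  case (Cons a xs)
  have ga: "g a \<le> a" using Cons.prems(1) by simp
  have le: "sum_list (map g xs) \<le> sum_list xs"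
  proof -
    have "sum_list (map g xs) \<le> sum_list (map (\<lambda>x. x) xs)"
      by (rule sum_list_mono) (use Cons.prems(1) in simp)
    then show ?thesis by simp
  qed
  show ?case
  proof (cases "g a < a")
    case True
    then show ?thesis using le by simp
  next
    case False
    then have "\<exists>x\<in>set xs. g x < x" using Cons.prems(2) by auto
    then have "sum_list (map g xs) < sum_list xs" using Cons.IH Cons.prems(1) by simp
    then show ?thesis using ga by simp
  qed
qed simp

lemma compress:
  assumes A: "\<And>k m. 1 \<le> k \<Longrightarrow> k \<le> n \<Longrightarrow> valid_mono m \<Longrightarrow> f (ins k m) = f m"
  shows "sorted_wrt (<) is \<Longrightarrow> \<forall>i\<in>set is. 1 \<le> i \<Longrightarrow> length is \<le> n \<Longrightarrow>
    f (mono_of is al) = f (mono_of [1..<length is + 1] al)"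
proof (induction "sum_list is" arbitrary: "is" rule: less_induct)
  case less
  let ?r = "length is"
  show ?case
  proof (cases "is = [1..<?r + 1]")
    case True
    then show ?thesis by simp
  next
    case False
    have dist: "distinct is" using less.prems(1) by (simp add: strict_sorted_iff)
    have ex: "\<exists>k. 1 \<le> k \<and> k \<le> ?r \<and> k \<notin> set is"
    proof (rule ccontr)
      assume "\<not> ?thesis"
      then have sub: "{1..?r} \<subseteq> set is" by auto
      have c1: "card (set is) = ?r" using distinct_card[OF dist] by simp
      have c2: "card {1..?r} = ?r" by simp
      have "{1..?r} = set is" using card_subset_eq[OF finite_set sub] c1 c2 by simp
      moreover have "set [1..<?r + 1] = {1..?r}" unfolding set_upt by auto
      ultimately have "set is = set [1..<?r + 1]" by simp
      then have "is = [1..<?r + 1]"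
        by (rule strict_sorted_equal[OF sorted_wrt_upt less.prems(1)])
      with False show False by simp
    qed
    then obtain k where k: "1 \<le> k" "k \<le> ?r" "k \<notin> set is" by blast
    have above: "\<exists>x\<in>set is. k < x"
    proof (rule ccontr)
      assume "\<not> ?thesis"
      then have le: "\<forall>x\<in>set is. x \<le> k" by (simp add: not_less)
      have "set is \<subseteq> {1..<k}"
      proof
        fix x assume x: "x \<in> set is"
        have "x \<le> k" "x \<noteq> k" "1 \<le> x" using le x k(3) less.prems(2) by auto
        then show "x \<in> {1..<k}" by simp
      qed
      then have "card (set is) \<le> k - 1" using card_mono[of "{1..<k}" "set is"] by simp
      moreover have "card (set is) = ?r" using distinct_card[OF dist] by simp
      ultimately show False using k by simp
    qed
    define g where "g = (\<lambda>i::nat. if i < k then i else i - 1)"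
    define ys where "ys = map g is"
    have nk: "\<And>x. x \<in> set is \<Longrightarrow> x \<noteq> k" using k(3) by blast
    have shg: "sh k (g x) = x" if "x \<in> set is" for x
      using nk[OF that] by (cases "x < k") (auto simp: g_def sh_def)
    have gl: "g x < g y" if "x \<in> set is" "y \<in> set is" "x < y" for x y
      using nk[OF that(1)] nk[OF that(2)] that(3) by (auto simp: g_def)
    have hback: "map (sh k) ys = is"
      unfolding ys_def map_map
      by (rule map_idI) (simp add: shg)
    have sorted': "sorted_wrt (<) ys"
      unfolding ys_def sorted_wrt_map
      by (rule sorted_wrt_mono_rel[OF _ less.prems(1)]) (rule gl)
    have pos': "\<forall>i\<in>set ys. 1 \<le> i"
    proof
      fix y assume "y \<in> set ys"
      then obtain x where x: "x \<in> set is" "y = g x" unfolding ys_def by auto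
      show "1 \<le> y" using nk[OF x(1)] less.prems(2) x k(1) by (auto simp: g_def)
    qed
    have len': "length ys = ?r" by (simp add: ys_def)
    have lt: "sum_list ys < sum_list is"
    proof -
      obtain x where x: "x \<in> set is" "k < x" using above by blast
      have "g x < x" using x by (simp add: g_def)
      then have "\<exists>x\<in>set is. g x < x" using x(1) by blast
      moreover have "\<forall>x\<in>set is. g x \<le> x" by (simp add: g_def)
      ultimately show ?thesis unfolding ys_def by (intro sum_list_less)
    qed
    have IH: "f (mono_of ys al) = f (mono_of [1..<?r + 1] al)"
      using less.hyps[OF lt sorted' pos'] len' less.prems(3) by simp
    have "f (mono_of is al) = f (ins k (mono_of ys al))"
      using hback ins_mono_of by metis
    also have "\<dots> = f (mono_of ys al)"
      using A[OF k(1) _ mono_of_valid[OF pos']] k(2) less.prems(3) by simp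
    finally show ?thesis using IH by simp
  qed
qed

theorem lemma8p3:
  fixes f :: "(nat \<Rightarrow> nat) \<Rightarrow> int" and n :: nat
  assumes "inK f" and "series_degree f = n"
  shows "quasi_symmetric f \<longleftrightarrow> (\<forall>k. 1 \<le> k \<and> k \<le> n \<longrightarrow> subst_A (seq_k k) f = f)"
proof
  assume qs: "quasi_symmetric f"
  show "\<forall>k. 1 \<le> k \<and> k \<le> n \<longrightarrow> subst_A (seq_k k) f = f"
  proof (intro allI impI)
    fix k assume k: "1 \<le> k \<and> k \<le> n"
    show "subst_A (seq_k k) f = f"
    proof
      fix m
      show "subst_A (seq_k k) f m = f m"
      proof (cases "valid_mono m")
        case False
        then show ?thesis using assms(1) k subst_seq_k unfolding inK_def by auto
      next
        case True
        define S where "S = {i. m i \<noteq> 0}"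
        have finS: "finite S" using True unfolding valid_mono_def S_def by simp
        define "is" where "is = sorted_list_of_set S"
        define al where "al = map m is"
        have setis: "set is = S" using finS is_def by simp
        have sis: "sorted_wrt (<) is" unfolding is_def by simp
        have dis: "distinct is" unfolding is_def by simp
        have pos: "\<forall>i\<in>set is. 1 \<le> i" using True setis unfolding valid_mono_def S_def
          by (metis (mono_tags, lifting) less_one mem_Collect_eq not_less)
        have mm: "mono_of is al = m"
        proof
          fix v
          show "mono_of is al v = m v"
          proof (cases "v \<in> set is")
            case True
            then obtain t where t: "t < length is" "v = is ! t" by (auto simp: in_set_conv_nth)
            then show ?thesis using mono_of_at[OF dis t(1)] by (simp add: al_def)
          next
            case False
            then show ?thesis using mono_of_notin setis S_def by auto
          qed
        qed
        have sis2: "sorted_wrt (<) (map (sh k) is)"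
          unfolding sorted_wrt_map
          by (rule sorted_wrt_mono_rel[OF _ sis]) (auto simp: sh_def)
        have pos2: "\<forall>i\<in>set (map (sh k) is). 1 \<le> i" using pos by (auto simp: sh_def)
        have alpos: "\<forall>e\<in>set al. 0 < e" using setis S_def al_def by auto
        have "f (mono_of is al) = f (mono_of (map (sh k) is) al)"
          using qs sis sis2 pos pos2 alpos unfolding quasi_symmetric_def al_def
          by (metis length_map)
        then have "f m = f (ins k m)" using mm ins_mono_of by metis
        then show ?thesis using subst_seq_k k True by simp
      qed
    qed
  qed
next
  assume H: "\<forall>k. 1 \<le> k \<and> k \<le> n \<longrightarrow> subst_A (seq_k k) f = f"
  have A: "f (ins k m) = f m" if "1 \<le> k" "k \<le> n" "valid_mono m" for k m
  proof -
    have "subst_A (seq_k k) f m = f m" using H that by simp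
    then show ?thesis using subst_seq_k that by simp
  qed
  show "quasi_symmetric f"
    unfolding quasi_symmetric_def
  proof (intro allI impI)
    fix al "is" js :: "nat list"
    assume a: "length is = length al \<and> length js = length al \<and> (\<forall>e\<in>set al. 0 < e)
        \<and> sorted_wrt (<) is \<and> sorted_wrt (<) js
        \<and> (\<forall>i\<in>set is. 1 \<le> i) \<and> (\<forall>j\<in>set js. 1 \<le> j)"
    have l1: "length is = length al" and l2: "length js = length al"
      and alpos: "\<forall>e\<in>set al. 0 < e" and s1: "sorted_wrt (<) is" and s2: "sorted_wrt (<) js"
      and p1: "\<forall>i\<in>set is. 1 \<le> i" and p2: "\<forall>j\<in>set js. 1 \<le> j" using a by simp_all
    have d1: "distinct is" using s1 by (simp add: strict_sorted_iff)
    have d2: "distinct js" using s2 by (simp add: strict_sorted_iff)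
    show "f (mono_of is al) = f (mono_of js al)"
    proof (cases "length al \<le> n")
      case True
      have "f (mono_of is al) = f (mono_of [1..<length is + 1] al)"
        using compress[of n f, OF A s1 p1] True l1 by simp
      moreover have "f (mono_of js al) = f (mono_of [1..<length js + 1] al)"
        using compress[of n f, OF A s2 p2] True l2 by simp
      ultimately show ?thesis using l1 l2 by simp
    next
      case False
      have z: "f (mono_of xs al) = 0" if "distinct xs" "length xs = length al" for xs
      proof (rule ccontr)
        assume "f (mono_of xs al) \<noteq> 0"
        then have "tdeg (mono_of xs al) \<le> series_degree f" by (rule deg_bound[OF assms(1)])
        then have "tdeg (mono_of xs al) \<le> n" using assms(2) by simp
        moreover have "length al \<le> tdeg (mono_of xs al)" by (rule tdeg_mono_of[OF that alpos])
        ultimately show False using False by simp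
      qed
      show ?thesis using z[OF d1 l1] z[OF d2 l2] by simp
    qed
  qed
qed

end
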